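(* Consider the model and the LinUCB-d algorithm described in the context, under assumptions (A1) and (A2). Let $\{\Phi_b\}$ be any choice of matrices as in the context, and let $\mathcal{C}_b^{(i)}$ be defined as there. Then for any arms $a,b\in[K]$ with $b\neq a$, any $i\in\{1,\dots,d\}$, and every $t\ge1$, \[ \bar N_t(a,\mathcal{C}_b^{(i)})\le\frac{8\alpha_t^2}{\Delta^2}\,d\log\Big(\frac{d+t}{d}\Big). \]
   Context: Model: $K$ arms $[K]$; each arm $a$ has an unknown parameter $\boldsymbol{\theta}(a)\in\mathbb{R}^d$; context set $\mathcal{C}$ and known feature vectors $\mathbf{x}(a,c)\in\mathbb{R}^d$. At each time $t$ the learner observes $c_t$, pulls $a_t$, observes $y_t=r(a_t,c_t)+\eta_t$ with $r(a,c)=\boldsymbol{\theta}(a)^\intercal\mathbf{x}(a,c)$. $\mathcal{C}_a=\{c: r(a,c)>r(b,c)\ \forall b\neq a\}$, $\mathcal{X}_a=\{\mathbf{x}(a,c):c\in\mathcal{C}_a\}$. (A1) $\|\boldsymbol{\theta}(a)\|_2\le s$, $\|\mathbf{x}(a,c)\|_2\le l$. (A2) There is $\Delta>0$ with $r(a,c)-r(b,c)\ge\Delta$ for all $a$, $b\ne a$, $c\in\mathcal{C}_a$. Algorithm LinUCB-d: $f(t)=1+t\log^2 t$, $\alpha_t=ls+\sqrt{(2+d)\log f(t)}$; $\mathbf{V}_t(a)=l^2\mathbf{I}_d+\sum_{\tau<t:\,a_\tau=a}\mathbf{x}(a,c_\tau)\mathbf{x}(a,c_\tau)^\intercal$, $\mathbf{b}_t(a)=\sum_{\tau<t:\,a_\tau=a}y_\tau\mathbf{x}(a,c_\tau)$,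 $\hat r_t(a)=\mathbf{x}(a,c_t)^\intercal\mathbf{V}_t(a)^{-1}\mathbf{b}_t(a)$, $\hat\sigma_t(a)=\sqrt{\mathbf{x}(a,c_t)^\intercal\mathbf{V}_t(a)^{-1}\mathbf{x}(a,c_t)}$; it pulls $a_t\in\arg\max_a\hat r_t(a)+\alpha_t\hat\sigma_t(a)$. Bad estimates: a time $\tau$ is bad if there is an arm $a'$ with $|\hat r_\tau(a')-r(a',c_\tau)|>\alpha_\tau\hat\sigma_\tau(a')$; $\mathcal{B}_t$ is the set of bad times in $[1,t)$. Groups: for each $b$, $\Phi_b$ is a $d\times d$ matrix with columns $\phi_b^{(1)},\dots,\phi_b^{(d)}\in\mathcal{X}_b$ and $\lambda_{\min}(\Phi_b^\intercal\Phi_b)>0$. $\mathcal{X}_b^{(i)}$ is the set of $\mathbf{x}\in\mathcal{X}_b$ with $\mathbf{x}^\intercal\phi_b^{(i)}/\|\phi_b^{(i)}\|_2<\mathbf{x}^\intercal\phi_b^{(j)}/\|\phi_b^{(j)}\|_2$ for all $j<i$ and $\le$ for all $j>i$; and $\mathcal{C}_b^{(i)}=\{c\in\mathcal{C}_b:\mathbf{x}(b,c)\in\mathcal{X}_b^{(i)}\}$. Counts: $\bar N_t(a,\mathcal{C}_b^{(i)})$ is the number of times $\tau$ with $1\le\tau<t$, $a_\tau=a$, $c_\tau\in\mathcal{C}_b^{(i)}$ and $\tau\notin\mathcal{B}_t$. *)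

theory Defs
  imports "HOL-Analysis.Analysis"
begin

text \<open>Arms are the natural numbers 1..K; times start at 1.\<close>

definition arms :: "nat \<Rightarrow> nat set" where
  "arms K = {1..K}"

definition rew :: "(nat \<Rightarrow> (real,'d::finite) vec) \<Rightarrow> (nat \<Rightarrow> 'c \<Rightarrow> (real,'d) vec) \<Rightarrow> nat \<Rightarrow> 'c \<Rightarrow> real" where
  "rew \<theta> x a c = \<theta> a \<bullet> x a c"

definition best_ctx :: "nat \<Rightarrow> 'c set \<Rightarrow> (nat \<Rightarrow> (real,'d::finite) vec) \<Rightarrow> (nat \<Rightarrow> 'c \<Rightarrow> (real,'d) vec) \<Rightarrow> nat \<Rightarrow> 'c set" where
  "best_ctx K Cs \<theta> x a = {c \<in> Cs. \<forall>b \<in> arms K. b \<noteq> a \<longrightarrow> rew \<theta> x a c > rew \<theta> x b c}"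

definition feat_set :: "nat \<Rightarrow> 'c set \<Rightarrow> (nat \<Rightarrow> (real,'d::finite) vec) \<Rightarrow> (nat \<Rightarrow> 'c \<Rightarrow> (real,'d) vec) \<Rightarrow> nat \<Rightarrow> ((real,'d) vec) set" where
  "feat_set K Cs \<theta> x a = (\<lambda>c. x a c) ` best_ctx K Cs \<theta> x a"

text \<open>Smallest eigenvalue of a symmetric matrix (variational / Rayleigh quotient form).\<close>
definition lambda_min :: "((real,'n::finite) vec,'n) vec \<Rightarrow> real" where
  "lambda_min M = Inf {v \<bullet> (M *v v) | v. norm v = 1}"

definition outer :: "(real,'d::finite) vec \<Rightarrow> ((real,'d) vec,'d) vec" where
  "outer v = (\<chi> i j. v$i * v$j)"

definition pulls :: "(nat \<Rightarrow> nat) \<Rightarrow> nat \<Rightarrow> nat \<Rightarrow> nat set" where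
  "pulls A t a = {\<tau>. 1 \<le> \<tau> \<and> \<tau> < t \<and> A \<tau> = a}"

definition Vmat :: "(nat \<Rightarrow> 'c \<Rightarrow> (real,'d::finite) vec) \<Rightarrow> real \<Rightarrow> (nat \<Rightarrow> nat) \<Rightarrow> (nat \<Rightarrow> 'c) \<Rightarrow> nat \<Rightarrow> nat \<Rightarrow> ((real,'d) vec,'d) vec" where
  "Vmat x l A C t a = (l^2) *\<^sub>R mat 1 + (\<Sum>\<tau> \<in> pulls A t a. outer (x a (C \<tau>)))"

definition bvec :: "(nat \<Rightarrow> 'c \<Rightarrow> (real,'d::finite) vec) \<Rightarrow> (nat \<Rightarrow> nat) \<Rightarrow> (nat \<Rightarrow> 'c) \<Rightarrow> (nat \<Rightarrow> real) \<Rightarrow> nat \<Rightarrow> nat \<Rightarrow> (real,'d) vec" where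
  "bvec x A C y t a = (\<Sum>\<tau> \<in> pulls A t a. y \<tau> *\<^sub>R x a (C \<tau>))"

definition rhat :: "(nat \<Rightarrow> 'c \<Rightarrow> (real,'d::finite) vec) \<Rightarrow> real \<Rightarrow> (nat \<Rightarrow> nat) \<Rightarrow> (nat \<Rightarrow> 'c) \<Rightarrow> (nat \<Rightarrow> real) \<Rightarrow> nat \<Rightarrow> nat \<Rightarrow> real" where
  "rhat x l A C y t a = x a (C t) \<bullet> (matrix_inv (Vmat x l A C t a) *v bvec x A C y t a)"

definition sighat :: "(nat \<Rightarrow> 'c \<Rightarrow> (real,'d::finite) vec) \<Rightarrow> real \<Rightarrow> (nat \<Rightarrow> nat) \<Rightarrow> (nat \<Rightarrow> 'c) \<Rightarrow> nat \<Rightarrow> nat \<Rightarrow> real" where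
  "sighat x l A C t a = sqrt (x a (C t) \<bullet> (matrix_inv (Vmat x l A C t a) *v x a (C t)))"

definition fexp :: "nat \<Rightarrow> real" where
  "fexp t = 1 + real t * (ln (real t))^2"

definition alpha :: "nat \<Rightarrow> real \<Rightarrow> real \<Rightarrow> nat \<Rightarrow> real" where
  "alpha d l s t = l * s + sqrt ((2 + real d) * ln (fexp t))"

definition bad_time :: "nat \<Rightarrow> (nat \<Rightarrow> (real,'d::finite) vec) \<Rightarrow> (nat \<Rightarrow> 'c \<Rightarrow> (real,'d) vec) \<Rightarrow> real \<Rightarrow> real
    \<Rightarrow> (nat \<Rightarrow> nat) \<Rightarrow> (nat \<Rightarrow> 'c) \<Rightarrow> (nat \<Rightarrow> real) \<Rightarrow> nat \<Rightarrow> bool" where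
  "bad_time K \<theta> x l s A C y \<tau> =
     (\<exists>a' \<in> arms K. \<bar>rhat x l A C y \<tau> a' - rew \<theta> x a' (C \<tau>)\<bar>
                     > alpha CARD('d) l s \<tau> * sighat x l A C \<tau> a')"

definition bad_set :: "nat \<Rightarrow> (nat \<Rightarrow> (real,'d::finite) vec) \<Rightarrow> (nat \<Rightarrow> 'c \<Rightarrow> (real,'d) vec) \<Rightarrow> real \<Rightarrow> real
    \<Rightarrow> (nat \<Rightarrow> nat) \<Rightarrow> (nat \<Rightarrow> 'c) \<Rightarrow> (nat \<Rightarrow> real) \<Rightarrow> nat \<Rightarrow> nat set" where
  "bad_set K \<theta> x l s A C y t = {\<tau>. 1 \<le> \<tau> \<and> \<tau> < t \<and> bad_time K \<theta> x l s A C y \<tau>}"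

definition group_feat :: "((real,'d::{finite,linorder}) vec) set \<Rightarrow> ((real,'d) vec,'d) vec \<Rightarrow> 'd \<Rightarrow> ((real,'d) vec) set" where
  "group_feat X \<Phi> i = {v \<in> X.
      (\<forall>j. j < i \<longrightarrow> v \<bullet> column i \<Phi> / norm (column i \<Phi>) < v \<bullet> column j \<Phi> / norm (column j \<Phi>)) \<and>
      (\<forall>j. j > i \<longrightarrow> v \<bullet> column i \<Phi> / norm (column i \<Phi>) \<le> v \<bullet> column j \<Phi> / norm (column j \<Phi>))}"

definition group_ctx :: "nat \<Rightarrow> 'c set \<Rightarrow> (nat \<Rightarrow> (real,'d::{finite,linorder}) vec) \<Rightarrow> (nat \<Rightarrow> 'c \<Rightarrow> (real,'d) vec)
    \<Rightarrow> ((real,'d) vec,'d) vec \<Rightarrow> nat \<Rightarrow> 'd \<Rightarrow> 'c set" where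
  "group_ctx K Cs \<theta> x \<Phi> b i =
     {c \<in> best_ctx K Cs \<theta> x b. x b c \<in> group_feat (feat_set K Cs \<theta> x b) \<Phi> i}"

definition Nbar :: "nat \<Rightarrow> (nat \<Rightarrow> (real,'d::finite) vec) \<Rightarrow> (nat \<Rightarrow> 'c \<Rightarrow> (real,'d) vec) \<Rightarrow> real \<Rightarrow> real
    \<Rightarrow> (nat \<Rightarrow> nat) \<Rightarrow> (nat \<Rightarrow> 'c) \<Rightarrow> (nat \<Rightarrow> real) \<Rightarrow> nat \<Rightarrow> nat \<Rightarrow> 'c set \<Rightarrow> nat" where
  "Nbar K \<theta> x l s A C y t a S =
     card {\<tau>. 1 \<le> \<tau> \<and> \<tau> < t \<and> A \<tau> = a \<and> C \<tau> \<in> S \<and> \<tau> \<notin> bad_set K \<theta> x l s A C y t}"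

end

theory Submission
  imports Defs
begin


lemma span_rows_unit:
  fixes B :: "real^'n^'n" and x :: "real^'n"
  assumes rows: "\<And>j. j \<noteq> k \<Longrightarrow> row j B = (\<chi> m. if j = m then 1 else 0)"
    and xk: "x$k = 0"
  shows "x \<in> vec.span {row j B | j. j \<noteq> k}"
proof -
  have eq: "x = (\<Sum>j\<in>UNIV-{k}. x$j *s row j B)"
  proof (subst vec_eq_iff, intro allI)
    fix m
    have "(\<Sum>j\<in>UNIV-{k}. x$j *s row j B)$m = (\<Sum>j\<in>UNIV-{k}. x$j * (if j = m then 1 else 0))"
      by (simp add: sum_component rows)
    also have "\<dots> = (\<Sum>j\<in>UNIV-{k}. if j = m then x$j else 0)"
      by (intro sum.cong) auto
    also have "\<dots> = x$m" using xk by (simp add: sum.delta)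
    finally show "x$m = (\<Sum>j\<in>UNIV-{k}. x$j *s row j B)$m" by simp
  qed
  show ?thesis
    by (subst eq, intro vec.span_sum vec.span_scale vec.span_base) auto
qed

lemma det_unit_row:
  fixes c :: "real^'n"
  assumes ck: "c$k = 0"
  shows "det ((\<chi> i j. (if i = j then 1 else 0) + (if i = k then c$j else 0)) :: real^'n^'n) = 1"
proof -
  let ?A = "mat 1 :: real^'n^'n"
  have "c \<in> vec.span {row j ?A | j. j \<noteq> k}"
    by (rule span_rows_unit) (auto simp: row_def mat_def ck)
  from det_row_span[OF this]
  have "det (\<chi> r. if r = k then row k ?A + c else row r ?A) = 1" by simp
  moreover have "(\<chi> r. if r = k then row k ?A + c else row r ?A) =
     ((\<chi> i j. (if i = j then 1 else 0) + (if i = k then c$j else 0)) :: real^'n^'n)"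
    by (auto simp: vec_eq_iff row_def mat_def)
  ultimately show ?thesis by simp
qed

lemma det_E_row:
  fixes w :: "real^'n"
  shows "det ((\<chi> i. if i = k then w else (\<chi> j. if i = j then 1 else 0)) :: real^'n^'n) = w$k"
proof -
  define B :: "real^'n^'n" where "B = (\<chi> i j. if i = j then (if i = k then w$k else 1) else 0)"
  define x :: "real^'n" where "x = (\<chi> j. if j = k then 0 else w$j)"
  have "x \<in> vec.span {row j B | j. j \<noteq> k}"
    by (rule span_rows_unit) (auto simp: row_def B_def x_def vec_eq_iff)
  from det_row_span[OF this]
  have "det (\<chi> r. if r = k then row k B + x else row r B) = det B" .
  moreover have "(\<chi> r. if r = k then row k B + x else row r B) =
     ((\<chi> i. if i = k then w else (\<chi> j. if i = j then 1 else 0)) :: real^'n^'n)"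
    by (auto simp: vec_eq_iff row_def B_def x_def)
  moreover have "det B = w$k"
    by (subst det_diagonal) (auto simp: B_def prod.delta)
  ultimately show ?thesis by simp
qed

lemma det_G_row:
  fixes w c :: "real^'n"
  shows "det ((\<chi> i. if i = k then w else (\<chi> j. if i = j then 1 else 0) + c$i *s w) :: real^'n^'n) = w$k"
proof -
  define F :: "real^'n^'n" where "F = (\<chi> i j. (if i = j then 1 else 0) + (if j = k \<and> i \<noteq> k then c$i else 0))"
  define E :: "real^'n^'n" where "E = (\<chi> i. if i = k then w else (\<chi> j. if i = j then 1 else 0))"
  define c' :: "real^'n" where "c' = (\<chi> j. if j \<noteq> k then c$j else 0)"
  have tF: "transpose F = (\<chi> i j. (if i = j then 1 else 0) + (if i = k then c'$j else 0))"
    by (auto simp: vec_eq_iff F_def transpose_def c'_def)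
  have d1: "det ((\<chi> i j. (if i = j then 1 else 0) + (if i = k then c'$j else 0)) :: real^'n^'n) = 1"
    by (rule det_unit_row) (simp add: c'_def)
  have dF: "det F = 1"
    using det_transpose[of F] unfolding tF d1 by simp
  have dE: "det E = w$k" unfolding E_def by (rule det_E_row)
  have FE: "F ** E = ((\<chi> i. if i = k then w else (\<chi> j. if i = j then 1 else 0) + c$i *s w) :: real^'n^'n)"
  proof (subst vec_eq_iff, intro allI, subst vec_eq_iff, intro allI)
    fix i j
    have "(F ** E)$i$j = (\<Sum>m\<in>UNIV. ((if i = m then 1 else 0) + (if m = k \<and> i \<noteq> k then c$i else 0)) * E$m$j)"
      by (simp add: matrix_matrix_mult_def F_def)
    also have "\<dots> = (\<Sum>m\<in>UNIV. (if i = m then E$m$j else 0)) + (\<Sum>m\<in>UNIV. (if m = k then (if i \<noteq> k then c$i * E$m$j else 0) else 0))"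
      by (subst sum.distrib[symmetric], intro sum.cong) auto
    also have "\<dots> = E$i$j + (if i \<noteq> k then c$i * E$k$j else 0)"
      by (simp add: sum.delta)
    finally show "(F ** E)$i$j = ((\<chi> i. if i = k then w else (\<chi> j. if i = j then 1 else 0) + c$i *s w) :: real^'n^'n)$i$j"
      by (auto simp: E_def)
  qed
  have "det (F ** E) = w$k" by (simp add: det_mul dF dE)
  then show ?thesis unfolding FE .
qed

lemma det_rank1_aux:
  fixes u z :: "real^'n"
  assumes "finite S"
  shows "det ((\<chi> i j. (if i = j then 1 else 0) + (if i \<in> S then u$i * z$j else 0)) :: real^'n^'n)
         = 1 + (\<Sum>i\<in>S. u$i * z$i)"
  using assms
proof (induction S rule: finite_induct)
  case empty
  have "((\<chi> i j. (if i = j then 1 else 0) + (if i \<in> {} then u$i * z$j else 0)) :: real^'n^'n) = mat 1"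
    by (simp add: mat_def vec_eq_iff)
  then show ?case by simp
next
  case (insert k S)
  define M :: "real^'n^'n" where "M = (\<chi> i j. (if i = j then 1 else 0) + (if i \<in> S then u$i * z$j else 0))"
  define c :: "real^'n" where "c = (\<chi> i. if i \<in> S then u$i else 0)"
  have eq1: "((\<chi> i j. (if i = j then 1 else 0) + (if i \<in> insert k S then u$i * z$j else 0)) :: real^'n^'n)
     = (\<chi> i. if i = k then row k M + u$k *s z else row i M)"
    using insert.hyps by (auto simp: vec_eq_iff M_def row_def)
  have eq2: "(\<chi> i. if i = k then row k M else row i M) = M"
    by (simp add: vec_eq_iff row_def)
  have eq3: "(\<chi> i. if i = k then z else row i M) =
     ((\<chi> i. if i = k then z else (\<chi> j. if i = j then 1 else 0) + c$i *s z) :: real^'n^'n)"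
    by (auto simp: vec_eq_iff M_def row_def c_def)
  have "det ((\<chi> i j. (if i = j then 1 else 0) + (if i \<in> insert k S then u$i * z$j else 0)) :: real^'n^'n)
     = det M + u$k * det (\<chi> i. if i = k then z else row i M)"
    unfolding eq1 det_row_add[of k "\<lambda>i. row k M" "\<lambda>i. u$k *s z" "\<lambda>i. row i M"]
      det_row_mul[of k "u$k" "\<lambda>i. z" "\<lambda>i. row i M"] eq2 ..
  also have "det (\<chi> i. if i = k then z else row i M) = z$k"
    unfolding eq3 by (rule det_G_row)
  finally show ?case using insert M_def by simp
qed

lemma det_rank1:
  fixes u z :: "real^'n"
  shows "det (mat 1 + (\<chi> i j. u$i * z$j) :: real^'n^'n) = 1 + u \<bullet> z"
proof -
  have "(mat 1 + (\<chi> i j. u$i * z$j) :: real^'n^'n) =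
     (\<chi> i j. (if i = j then 1 else 0) + (if i \<in> UNIV then u$i * z$j else 0))"
    by (simp add: mat_def vec_eq_iff)
  then show ?thesis using det_rank1_aux[of UNIV u z] by (simp add: inner_vec_def)
qed

lemma mv_axis: "((G::real^'n^'m) *v axis j 1)$i = G$i$j"
proof -
  have "(G *v axis j 1)$i = (\<Sum>m\<in>UNIV. if m = j then G$i$m else 0)"
    unfolding matrix_vector_mult_def vec_lambda_beta by (intro sum.cong) (auto simp: axis_def)
  then show ?thesis by simp
qed

lemma quad_axis: "axis i 1 \<bullet> ((G::real^'n^'n) *v axis j 1) = G$i$j"
  by (simp add: inner_axis' mv_axis)

lemma dot_mat: "(x::real^'n) \<bullet> ((A::real^'m^'n) *v y) = (transpose A *v x) \<bullet> y"
  by (simp add: dot_lmul_matrix)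

lemma psd_diag:
  assumes "\<forall>v. 0 \<le> v \<bullet> ((G::real^'n^'n) *v v)"
  shows "0 \<le> G$i$i"
  using assms quad_axis[of i G i] by metis

lemma psd_row_zero:
  fixes G :: "real^'n^'n"
  assumes sym: "transpose G = G" and psd: "\<forall>v. 0 \<le> v \<bullet> (G *v v)" and kk: "G$k$k = 0"
  shows "G$k$j = 0"
proof (rule ccontr)
  assume ne: "G$k$j \<noteq> 0"
  then have jk: "j \<noteq> k" using kk by auto
  have s: "G$j$k = G$k$j" using sym by (metis transpose_def vec_lambda_beta)
  define t where "t = - (G$j$j + 1) / (2 * G$k$j)"
  define ek where "ek = axis k (1::real)"
  define ej where "ej = axis j (1::real)"
  define v where "v = t *\<^sub>R ek + ej"
  have Gv: "G *v v = t *\<^sub>R (G *v ek) + G *v ej"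
    by (simp add: v_def matrix_vector_right_distrib matrix_vector_mult_scaleR)
  have "v \<bullet> (G *v v) = t * t * (ek \<bullet> (G *v ek)) + t * (ek \<bullet> (G *v ej)) + t * (ej \<bullet> (G *v ek)) + ej \<bullet> (G *v ej)"
    unfolding Gv by (simp add: v_def inner_add_left inner_add_right distrib_left)
  also have "\<dots> = t * t * G$k$k + t * G$k$j + t * G$j$k + G$j$j"
    by (simp add: ek_def ej_def quad_axis)
  also have "\<dots> = 2 * t * G$k$j + G$j$j" using kk s by simp
  also have "\<dots> = -1" using ne by (simp add: t_def field_simps)
  finally show False using psd by (metis neg_0_le_iff_le not_one_le_zero)
qed

lemma E_mult_left:
  fixes A :: "real^'n^'n" and c :: "real^'n"
  shows "((\<chi> i j. (if i = j then 1 else 0) - (if j = k then c$i else 0)) ** A)$i$j = A$i$j - c$i * A$k$j"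
proof -
  have "((\<chi> i j. (if i = j then 1 else 0) - (if j = k then c$i else 0)) ** A)$i$j
      = (\<Sum>m\<in>UNIV. (if i = m then A$m$j else 0) - (if m = k then c$i * A$m$j else 0))"
    unfolding matrix_matrix_mult_def vec_lambda_beta by (intro sum.cong) (auto simp: algebra_simps)
  also have "\<dots> = (\<Sum>m\<in>UNIV. (if i = m then A$m$j else 0)) - (\<Sum>m\<in>UNIV. (if m = k then c$i * A$m$j else 0))"
    by (rule sum_subtractf)
  finally show ?thesis by simp
qed

lemma E_mult_right:
  fixes A :: "real^'n^'n" and c :: "real^'n"
  shows "(A ** transpose (\<chi> i j. (if i = j then 1 else 0) - (if j = k then c$i else 0)))$i$j = A$i$j - c$j * A$i$k"
proof -
  have "(A ** transpose (\<chi> i j. (if i = j then 1 else 0) - (if j = k then c$i else 0)))$i$j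
      = (\<Sum>m\<in>UNIV. (if m = j then A$i$m else 0) - (if m = k then c$j * A$i$m else 0))"
    unfolding matrix_matrix_mult_def transpose_def vec_lambda_beta by (intro sum.cong) (auto simp: algebra_simps)
  also have "\<dots> = (\<Sum>m\<in>UNIV. (if m = j then A$i$m else 0)) - (\<Sum>m\<in>UNIV. (if m = k then c$j * A$i$m else 0))"
    by (rule sum_subtractf)
  finally show ?thesis by simp
qed

lemma hadamard_aux:
  fixes G :: "real^'n^'n"
  assumes sym: "transpose G = G" and psd: "\<forall>v. 0 \<le> v \<bullet> (G *v v)" and fin: "finite S"
  shows "\<exists>G'. transpose G' = G' \<and> (\<forall>v. 0 \<le> v \<bullet> (G' *v v)) \<and> det G' = det G \<and>
           (\<forall>i. G'$i$i \<le> G$i$i) \<and> (\<forall>i\<in>S. \<forall>j. j \<noteq> i \<longrightarrow> G'$i$j = 0 \<and> G'$j$i = 0)"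
  using fin
proof (induction S rule: finite_induct)
  case empty
  show ?case using sym psd by (intro exI[of _ G]) auto
next
  case (insert k S)
  then obtain G' where sym': "transpose G' = G'" and psd': "\<forall>v. 0 \<le> v \<bullet> (G' *v v)"
    and det': "det G' = det G" and diag': "\<forall>i. G'$i$i \<le> G$i$i"
    and zero': "\<forall>i\<in>S. \<forall>j. j \<noteq> i \<longrightarrow> G'$i$j = 0 \<and> G'$j$i = 0" by blast
  have symE: "G'$i$j = G'$j$i" for i j using sym' by (metis transpose_def vec_lambda_beta)
  show ?case
  proof (cases "G'$k$k = 0")
    case True
    have "G'$k$j = 0" for j using psd_row_zero[OF sym' psd' True] .
    then show ?thesis using sym' psd' det' diag' zero' symE
      by (intro exI[of _ G']) auto
  next
    case False
    define g where "g = G'$k$k"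
    have gpos: "g > 0" using psd_diag[OF psd', of k] False g_def by simp
    define c :: "real^'n" where "c = (\<chi> i. if i = k then 0 else G'$i$k / g)"
    define E :: "real^'n^'n" where "E = (\<chi> i j. (if i = j then 1 else 0) - (if j = k then c$i else 0))"
    define H where "H = E ** G' ** transpose E"
    have ent: "H$i$j = G'$i$j - c$j * G'$i$k - c$i * G'$k$j + c$i * c$j * g" for i j
      unfolding H_def E_def
      by (simp add: E_mult_left E_mult_right g_def algebra_simps)
    have ck: "c$k = 0" by (simp add: c_def)
    have tE: "transpose E = (\<chi> i j. (if i = j then 1 else 0) + (if i = k then (-c)$j else 0))"
      by (auto simp: vec_eq_iff E_def transpose_def)
    have d1: "det ((\<chi> i j. (if i = j then 1 else 0) + (if i = k then (-c)$j else 0)) :: real^'n^'n) = 1"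
      by (rule det_unit_row) (simp add: ck)
    have dE: "det E = 1" using det_transpose[of E] unfolding tE d1 by simp
    have detH: "det H = det G" unfolding H_def by (simp add: det_mul dE det')
    have symH: "transpose H = H"
      by (simp add: vec_eq_iff transpose_def ent symE algebra_simps)
    have psdH: "\<forall>v. 0 \<le> v \<bullet> (H *v v)"
    proof
      fix v :: "real^'n"
      have "v \<bullet> (H *v v) = (transpose E *v v) \<bullet> (G' *v (transpose E *v v))"
        unfolding H_def by (simp only: matrix_vector_mul_assoc[symmetric] dot_mat)
      then show "0 \<le> v \<bullet> (H *v v)" using psd' by simp
    qed
    have diagH: "H$i$i \<le> G$i$i" for i
    proof (cases "i = k")
      case True then show ?thesis using ent[of k k] ck diag' by simp
    next
      case False
      have "H$i$i = G'$i$i - 2 * (G'$i$k / g) * G'$i$k + (G'$i$k / g) * (G'$i$k / g) * g"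
        using ent[of i i] False symE[of k i] by (simp add: c_def)
      also have "\<dots> = G'$i$i - (G'$i$k)^2 / g"
        using gpos by (simp add: field_simps power2_eq_square)
      also have "\<dots> \<le> G'$i$i" using gpos by simp
      finally show ?thesis using diag'[rule_format, of i] by simp
    qed
    have zeroH: "\<forall>i\<in>insert k S. \<forall>j. j \<noteq> i \<longrightarrow> H$i$j = 0 \<and> H$j$i = 0"
    proof (intro ballI allI impI)
      fix i j assume i: "i \<in> insert k S" and ji: "j \<noteq> i"
      show "H$i$j = 0 \<and> H$j$i = 0"
      proof (cases "i = k")
        case True
        then show ?thesis using ent[of k j] ent[of j k] ck ji gpos symE[of j k]
          by (simp add: c_def g_def)
      next
        case False
        then have iS: "i \<in> S" using i by auto
        have z1: "G'$i$k = 0" "G'$k$i = 0" using zero' iS False by auto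
        have ci: "c$i = 0" using z1 by (simp add: c_def)
        show ?thesis using ent[of i j] ent[of j i] z1 ci zero' iS ji by auto
      qed
    qed
    show ?thesis using symH psdH detH diagH zeroH by blast
  qed
qed

lemma hadamard:
  fixes G :: "real^'n^'n"
  assumes sym: "transpose G = G" and psd: "\<forall>v. 0 \<le> v \<bullet> (G *v v)"
  shows "det G \<le> (\<Prod>i\<in>UNIV. G$i$i)"
proof -
  obtain G' where psd': "\<forall>v. 0 \<le> v \<bullet> (G' *v v)" and det': "det G' = det G"
    and diag': "\<forall>i. G'$i$i \<le> G$i$i" and zero': "\<forall>i\<in>UNIV. \<forall>j. j \<noteq> i \<longrightarrow> G'$i$j = 0 \<and> G'$j$i = 0"
    using hadamard_aux[OF sym psd, of UNIV] by auto
  have "det G' = (\<Prod>i\<in>UNIV. G'$i$i)"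
    by (rule det_diagonal) (use zero' in auto)
  also have "\<dots> \<le> (\<Prod>i\<in>UNIV. G$i$i)"
    by (intro prod_mono) (use psd_diag[OF psd'] diag' in auto)
  finally show ?thesis using det' by simp
qed



lemma mat_vec_sum: "(sum f S) *v v = (\<Sum>i\<in>S. f i *v (v::real^'n))" for f :: "'a \<Rightarrow> real^'n^'m"
  by (induction S rule: infinite_finite_induct) (auto simp: matrix_vector_mult_add_rdistrib)

lemma outer_mult: "outer w *v v = (w \<bullet> v) *\<^sub>R w"
  by (simp add: outer_def matrix_vector_mult_def inner_vec_def sum_distrib_left vec_eq_iff algebra_simps)

lemma pulls_Suc: "pulls A (Suc t) a = (if 1 \<le> t \<and> A t = a then insert t (pulls A t a) else pulls A t a)"
  by (auto simp: pulls_def less_Suc_eq)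

lemma pulls_sub: "pulls A t a \<subseteq> {1..<t}"
  by (auto simp: pulls_def)

lemma finite_pulls: "finite (pulls A t a)"
  by (rule finite_subset[OF pulls_sub]) simp

lemma not_in_pulls: "t \<notin> pulls A t a"
  by (auto simp: pulls_def)

lemma card_pulls: "card (pulls A t a) \<le> t"
proof -
  have "card (pulls A t a) \<le> card {1..<t}" by (rule card_mono[OF _ pulls_sub]) auto
  then show ?thesis by simp
qed

lemma Vmat_Suc: "1 \<le> t \<Longrightarrow> A t = a \<Longrightarrow> Vmat x l A C (Suc t) a = Vmat x l A C t a + outer (x a (C t))"
proof -
  assume h: "1 \<le> t" "A t = a"
  have P: "pulls A (Suc t) a = insert t (pulls A t a)" using h by (simp add: pulls_Suc)
  show ?thesis
    by (simp only: Vmat_def P sum.insert[OF finite_pulls not_in_pulls]) (simp add: ac_simps)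
qed

lemma Vmat_Suc': "\<not> (1 \<le> t \<and> A t = a) \<Longrightarrow> Vmat x l A C (Suc t) a = Vmat x l A C t a"
proof -
  assume h: "\<not> (1 \<le> t \<and> A t = a)"
  have "pulls A (Suc t) a = pulls A t a" using h by (simp only: pulls_Suc if_False)
  then show ?thesis unfolding Vmat_def by simp
qed

lemma Vmat_quad: "v \<bullet> (Vmat x l A C t a *v v) = l^2 * (v \<bullet> v) + (\<Sum>\<tau>\<in>pulls A t a. (x a (C \<tau>) \<bullet> v)^2)"
proof -
  have m1: "(l^2 *\<^sub>R mat 1) *v v = l^2 *\<^sub>R v"
    by (simp only: scaleR_matrix_vector_assoc[symmetric] matrix_vector_mul_lid)
  have "Vmat x l A C t a *v v = l^2 *\<^sub>R v + (\<Sum>\<tau>\<in>pulls A t a. (x a (C \<tau>) \<bullet> v) *\<^sub>R x a (C \<tau>))"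
    unfolding Vmat_def matrix_vector_mult_add_rdistrib mat_vec_sum outer_mult m1 ..
  then have "v \<bullet> (Vmat x l A C t a *v v) = l^2 * (v \<bullet> v) + (\<Sum>\<tau>\<in>pulls A t a. (x a (C \<tau>) \<bullet> v) * (v \<bullet> x a (C \<tau>)))"
    by (simp only: inner_add_right inner_sum_right inner_scaleR_right)
  also have "(\<Sum>\<tau>\<in>pulls A t a. (x a (C \<tau>) \<bullet> v) * (v \<bullet> x a (C \<tau>))) = (\<Sum>\<tau>\<in>pulls A t a. (x a (C \<tau>) \<bullet> v)^2)"
    by (intro sum.cong refl) (metis inner_commute power2_eq_square)
  finally show ?thesis .
qed

lemma Vmat_entry: "Vmat x l A C t a $ i $ j = (if i = j then l^2 else 0) + (\<Sum>\<tau>\<in>pulls A t a. x a (C \<tau>) $ i * x a (C \<tau>) $ j)"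
  by (simp add: Vmat_def sum_component outer_def mat_def)

lemma Vmat_sym: "transpose (Vmat x l A C t a) = Vmat x l A C t a"
proof -
  have e: "Vmat x l A C t a $ j $ i = Vmat x l A C t a $ i $ j" for i j
  proof -
    have "(if j = i then l^2 else (0::real)) = (if i = j then l^2 else 0)" by auto
    moreover have "(\<Sum>\<tau>\<in>pulls A t a. x a (C \<tau>) $ j * x a (C \<tau>) $ i) = (\<Sum>\<tau>\<in>pulls A t a. x a (C \<tau>) $ i * x a (C \<tau>) $ j)"
      by (intro sum.cong refl) (rule mult.commute)
    ultimately show ?thesis unfolding Vmat_entry by simp
  qed
  show ?thesis by (simp add: vec_eq_iff transpose_def e)
qed

lemma Vmat_psd: "\<forall>v. 0 \<le> v \<bullet> (Vmat x l A C t a *v v)"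
  by (simp add: Vmat_quad sum_nonneg)

lemma Vmat_trace: "(\<Sum>i\<in>UNIV. Vmat x l A C t a $ i $ i) = real CARD('d) * l^2 + (\<Sum>\<tau>\<in>pulls A t a. (norm (x a (C \<tau>)))^2)"
  for x :: "nat \<Rightarrow> 'c \<Rightarrow> real^'d"
proof -
  have "(\<Sum>i\<in>UNIV. Vmat x l A C t a $ i $ i) = (\<Sum>i\<in>(UNIV::'d set). l^2) + (\<Sum>i\<in>UNIV. \<Sum>\<tau>\<in>pulls A t a. x a (C \<tau>) $ i * x a (C \<tau>) $ i)"
    by (simp add: Vmat_entry sum.distrib)
  moreover have "(\<Sum>i\<in>UNIV. \<Sum>\<tau>\<in>pulls A t a. x a (C \<tau>) $ i * x a (C \<tau>) $ i) = (\<Sum>\<tau>\<in>pulls A t a. (norm (x a (C \<tau>)))^2)"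
  proof (subst sum.swap, intro sum.cong refl)
    fix \<tau>
    show "(\<Sum>i\<in>UNIV. x a (C \<tau>) $ i * x a (C \<tau>) $ i) = (norm (x a (C \<tau>)))^2"
      unfolding power2_norm_eq_inner inner_vec_def inner_real_def ..
  qed
  moreover have "(\<Sum>i\<in>(UNIV::'d set). l^2) = real CARD('d) * l^2" by simp
  ultimately show ?thesis by (simp only:)
qed

lemma Vmat_inv:
  assumes "l > 0"
  shows "invertible (Vmat x l A C t a)"
proof -
  have "\<forall>v. Vmat x l A C t a *v v = 0 \<longrightarrow> v = 0"
  proof (intro allI impI)
    fix v assume "Vmat x l A C t a *v v = 0"
    then have "0 = l^2 * (v \<bullet> v) + (\<Sum>\<tau>\<in>pulls A t a. (x a (C \<tau>) \<bullet> v)^2)"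
      using Vmat_quad[of v x l A C t a] by simp
    moreover have "0 \<le> (\<Sum>\<tau>\<in>pulls A t a. (x a (C \<tau>) \<bullet> v)^2)" by (simp add: sum_nonneg)
    ultimately have "l^2 * (v \<bullet> v) \<le> 0" by linarith
    then have "v \<bullet> v \<le> 0" using assms by (simp add: mult_le_0_iff)
    then show "v = 0" by (metis inner_ge_zero inner_eq_zero_iff order_antisym)
  qed
  then show ?thesis unfolding invertible_left_inverse matrix_left_invertible_ker .
qed

lemma matrix_inv_props:
  assumes "invertible (M::real^'n^'n)"
  shows "M ** matrix_inv M = mat 1" "matrix_inv M ** M = mat 1"
proof -
  have "M ** matrix_inv M = mat 1 \<and> matrix_inv M ** M = mat 1"
    using assms unfolding matrix_inv_def invertible_def by (rule someI_ex)
  then show "M ** matrix_inv M = mat 1" "matrix_inv M ** M = mat 1" by auto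
qed

lemma det_update:
  fixes V :: "real^'n^'n"
  assumes inv: "invertible V"
  shows "det (V + outer z) = det V * (1 + z \<bullet> (matrix_inv V *v z))"
proof -
  define u where "u = matrix_inv V *v z"
  have Vu: "V *v u = z"
    unfolding u_def matrix_vector_mul_assoc matrix_inv_props(1)[OF inv] by simp
  have "V ** (\<chi> i j. u$i * z$j) = outer z"
  proof (subst vec_eq_iff, intro allI, subst vec_eq_iff, intro allI)
    fix i j
    have "(V ** (\<chi> i j. u$i * z$j))$i$j = (\<Sum>m\<in>UNIV. V$i$m * u$m) * z$j"
      by (simp add: matrix_matrix_mult_def sum_distrib_right mult.assoc)
    also have "\<dots> = (V *v u)$i * z$j" by (simp add: matrix_vector_mult_def)
    finally show "(V ** (\<chi> i j. u$i * z$j))$i$j = outer z $i$j" using Vu by (simp add: outer_def)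
  qed
  then have "V + outer z = V ** (mat 1 + (\<chi> i j. u$i * z$j))"
    by (simp add: matrix_add_ldistrib)
  then have "det (V + outer z) = det V * (1 + u \<bullet> z)"
    by (simp add: det_mul det_rank1)
  then show ?thesis by (simp add: u_def inner_commute)
qed

lemma q_nonneg:
  assumes inv: "invertible (Vmat x l A C t a)"
  shows "0 \<le> z \<bullet> (matrix_inv (Vmat x l A C t a) *v z)"
proof -
  define V where "V = Vmat x l A C t a"
  define u where "u = matrix_inv V *v z"
  have Vu: "V *v u = z"
    unfolding u_def matrix_vector_mul_assoc matrix_inv_props(1)[OF inv[folded V_def]] by simp
  have "z \<bullet> u = u \<bullet> (V *v u)" using Vu by (simp add: inner_commute)
  also have "\<dots> \<ge> 0" unfolding V_def by (rule Vmat_psd[rule_format])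
  finally show ?thesis by (simp add: u_def V_def)
qed


lemma det_Vmat:
  fixes x :: "nat \<Rightarrow> 'c \<Rightarrow> real^'d"
  assumes l: "l > 0"
  shows "det (Vmat x l A C t a) = (l^2)^CARD('d) *
           (\<Prod>\<tau>\<in>pulls A t a. 1 + x a (C \<tau>) \<bullet> (matrix_inv (Vmat x l A C \<tau> a) *v x a (C \<tau>)))"
proof (induction t)
  case 0
  have P: "pulls A 0 a = {}" by (simp add: pulls_def)
  have "det (Vmat x l A C 0 a) = (\<Prod>i\<in>(UNIV::'d set). l^2)"
    by (subst det_diagonal) (simp_all add: Vmat_entry P)
  then show ?case by (simp add: P)
next
  case (Suc t)
  show ?case
  proof (cases "1 \<le> t \<and> A t = a")
    case True
    have P: "pulls A (Suc t) a = insert t (pulls A t a)" using True by (simp add: pulls_Suc)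
    have "det (Vmat x l A C (Suc t) a) = det (Vmat x l A C t a) * (1 + x a (C t) \<bullet> (matrix_inv (Vmat x l A C t a) *v x a (C t)))"
      using True by (simp add: Vmat_Suc det_update[OF Vmat_inv[OF l]])
    then show ?thesis
      unfolding P prod.insert[OF finite_pulls not_in_pulls] Suc.IH by (simp add: ac_simps)
  next
    case False
    have P: "pulls A (Suc t) a = pulls A t a" using False by (simp only: pulls_Suc if_False)
    show ?thesis unfolding P Vmat_Suc'[of t A a x l C, OF False] Suc.IH ..
  qed
qed

lemma amgm:
  fixes a :: "'n::finite \<Rightarrow> real"
  assumes "\<And>i. 0 \<le> a i"
  shows "(\<Prod>i\<in>UNIV. a i) \<le> ((\<Sum>i\<in>UNIV. a i) / real CARD('n))^CARD('n)"
proof (cases "(\<Prod>i\<in>UNIV. a i) = 0")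
  case True
  have "0 \<le> ((\<Sum>i\<in>UNIV. a i) / real CARD('n))^CARD('n)"
    by (intro zero_le_power divide_nonneg_nonneg sum_nonneg) (auto simp: assms)
  then show ?thesis using True by linarith
next
  case False
  have pos: "(\<Prod>i\<in>UNIV. a i) > 0" using False assms by (simp add: less_le prod_nonneg)
  have am: "(\<Prod>i\<in>UNIV. a i) powr (1 / real CARD('n)) \<le> (\<Sum>i\<in>UNIV. a i / real CARD('n))"
    using arith_geom_mean[of "UNIV::'n set" a] assms by simp
  define y where "y = (\<Prod>i\<in>UNIV. a i)"
  have ypos: "0 < y" using pos y_def by simp
  have "(y powr (1 / real CARD('n))) ^ CARD('n) = (y powr (1 / real CARD('n))) powr (real CARD('n))"
    using ypos by (intro powr_realpow[symmetric]) simp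
  also have "\<dots> = y powr (1 / real CARD('n) * real CARD('n))" by (simp add: powr_powr)
  also have "\<dots> = y" using ypos by simp
  finally have "(\<Prod>i\<in>UNIV. a i) = ((\<Prod>i\<in>UNIV. a i) powr (1 / real CARD('n))) ^ CARD('n)"
    unfolding y_def by simp
  also have "\<dots> \<le> (\<Sum>i\<in>UNIV. a i / real CARD('n)) ^ CARD('n)"
    by (rule power_mono[OF am]) simp
  finally show ?thesis by (simp add: sum_divide_distrib)
qed

lemma det_upper:
  fixes x :: "nat \<Rightarrow> 'c \<Rightarrow> real^'d"
  assumes l: "l > 0" and nb: "\<forall>\<tau>\<in>pulls A t a. norm (x a (C \<tau>)) \<le> l"
  shows "det (Vmat x l A C t a) \<le> (l^2 * ((real CARD('d) + real (card (pulls A t a))) / real CARD('d)))^CARD('d)"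
proof -
  let ?V = "Vmat x l A C t a"
  have "det ?V \<le> (\<Prod>i\<in>UNIV. ?V$i$i)" by (rule hadamard[OF Vmat_sym Vmat_psd])
  also have "\<dots> \<le> ((\<Sum>i\<in>UNIV. ?V$i$i) / real CARD('d))^CARD('d)"
    by (rule amgm) (rule psd_diag[OF Vmat_psd])
  also have "\<dots> \<le> (l^2 * ((real CARD('d) + real (card (pulls A t a))) / real CARD('d)))^CARD('d)"
  proof (rule power_mono)
    have "(\<Sum>\<tau>\<in>pulls A t a. (norm (x a (C \<tau>)))^2) \<le> real (card (pulls A t a)) * l^2"
      using sum_bounded_above[of "pulls A t a" "\<lambda>\<tau>. (norm (x a (C \<tau>)))^2" "l^2"] nb
      by (simp add: power_mono)
    then have "(\<Sum>i\<in>UNIV. ?V$i$i) \<le> l^2 * (real CARD('d) + real (card (pulls A t a)))"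
      unfolding Vmat_trace by (simp add: algebra_simps)
    then show "(\<Sum>i\<in>UNIV. ?V$i$i) / real CARD('d) \<le> l^2 * ((real CARD('d) + real (card (pulls A t a))) / real CARD('d))"
      by (simp add: divide_right_mono)
    show "0 \<le> (\<Sum>i\<in>UNIV. ?V$i$i) / real CARD('d)"
      by (intro divide_nonneg_nonneg sum_nonneg psd_diag[OF Vmat_psd]) simp
  qed
  finally show ?thesis .
qed

lemma count_bound:
  fixes x :: "nat \<Rightarrow> 'c \<Rightarrow> real^'d"
  assumes l: "l > 0" and nb: "\<forall>\<tau>\<in>pulls A t a. norm (x a (C \<tau>)) \<le> l"
    and T: "T \<subseteq> pulls A t a" and eps: "\<epsilon> > 0"
    and qT: "\<forall>\<tau>\<in>T. \<epsilon> \<le> x a (C \<tau>) \<bullet> (matrix_inv (Vmat x l A C \<tau> a) *v x a (C \<tau>))"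
  shows "(1 + \<epsilon>)^card T \<le> ((real CARD('d) + real (card (pulls A t a))) / real CARD('d))^CARD('d)"
proof -
  define q where "q \<tau> = x a (C \<tau>) \<bullet> (matrix_inv (Vmat x l A C \<tau> a) *v x a (C \<tau>))" for \<tau>
  define P where "P = pulls A t a"
  have q0: "0 \<le> q \<tau>" for \<tau> unfolding q_def by (rule q_nonneg[OF Vmat_inv[OF l]])
  have finP: "finite P" unfolding P_def by (rule finite_pulls)
  have "(1 + \<epsilon>)^card T = (\<Prod>\<tau>\<in>T. 1 + \<epsilon>)" by simp
  also have "\<dots> \<le> (\<Prod>\<tau>\<in>T. 1 + q \<tau>)"
    by (rule prod_mono) (use eps qT q_def in auto)
  also have "\<dots> \<le> (\<Prod>\<tau>\<in>P - T. 1 + q \<tau>) * (\<Prod>\<tau>\<in>T. 1 + q \<tau>)"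
  proof -
    have "1 \<le> (\<Prod>\<tau>\<in>P - T. 1 + q \<tau>)" by (rule prod_ge_1) (use q0 in auto)
    moreover have "0 \<le> (\<Prod>\<tau>\<in>T. 1 + q \<tau>)" by (rule prod_nonneg) (use q0 in auto)
    ultimately show ?thesis by (metis mult_le_cancel_right1 not_le less_le_trans mult_right_mono mult_1)
  qed
  also have "\<dots> = (\<Prod>\<tau>\<in>P. 1 + q \<tau>)"
    using prod.subset_diff[OF T[folded P_def] finP, of "\<lambda>\<tau>. 1 + q \<tau>"] by simp
  finally have lo: "(1 + \<epsilon>)^card T \<le> (\<Prod>\<tau>\<in>P. 1 + q \<tau>)" .
  have "(l^2)^CARD('d) * (\<Prod>\<tau>\<in>P. 1 + q \<tau>) = det (Vmat x l A C t a)"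
    unfolding det_Vmat[OF l] P_def q_def ..
  also have "\<dots> \<le> (l^2 * ((real CARD('d) + real (card P)) / real CARD('d)))^CARD('d)"
    using det_upper[of l A t a x C, OF l nb] unfolding P_def .
  also have "\<dots> = (l^2)^CARD('d) * ((real CARD('d) + real (card P)) / real CARD('d))^CARD('d)"
    by (rule power_mult_distrib)
  finally have "(\<Prod>\<tau>\<in>P. 1 + q \<tau>) \<le> ((real CARD('d) + real (card P)) / real CARD('d))^CARD('d)"
    using l by simp
  then show ?thesis using lo unfolding P_def by simp
qed


lemma alpha_mono:
  assumes "1 \<le> \<tau>" "\<tau> \<le> t"
  shows "alpha d l s \<tau> \<le> alpha d l s t"
proof -
  have l1: "0 \<le> ln (real \<tau>)" using assms by simp
  have l2: "ln (real \<tau>) \<le> ln (real t)" using assms by simp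
  have "(ln (real \<tau>))^2 \<le> (ln (real t))^2" using l2 l1 by (rule power_mono)
  then have "real \<tau> * (ln (real \<tau>))^2 \<le> real t * (ln (real t))^2"
    using assms by (intro mult_mono) auto
  then have f: "fexp \<tau> \<le> fexp t" by (simp add: fexp_def)
  have fpos: "0 < fexp \<tau>" by (simp add: fexp_def add_pos_nonneg)
  have "ln (fexp \<tau>) \<le> ln (fexp t)" using f fpos by (rule ln_mono)
  then have "(2 + real d) * ln (fexp \<tau>) \<le> (2 + real d) * ln (fexp t)" by (rule mult_left_mono) simp
  then show ?thesis unfolding alpha_def using real_sqrt_le_mono by simp
qed

theorem lemma9:
  fixes K :: nat and Cs :: "'c set"
    and \<theta> :: "nat \<Rightarrow> (real,'d::{finite,linorder}) vec" and x :: "nat \<Rightarrow> 'c \<Rightarrow> (real,'d) vec"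
    and l s \<Delta> :: real
    and C :: "nat \<Rightarrow> 'c" and A :: "nat \<Rightarrow> nat" and \<eta> :: "nat \<Rightarrow> real" and y :: "nat \<Rightarrow> real"
    and \<Phi> :: "nat \<Rightarrow> ((real,'d) vec,'d) vec"
    and a b :: nat and i :: 'd and t :: nat
  assumes A1_theta: "\<forall>a' \<in> arms K. norm (\<theta> a') \<le> s"
    and A1_x: "\<forall>a' \<in> arms K. \<forall>c \<in> Cs. norm (x a' c) \<le> l"
    and A2_pos: "\<Delta> > 0"
    and A2: "\<forall>a' \<in> arms K. \<forall>b' \<in> arms K. b' \<noteq> a' \<longrightarrow>
               (\<forall>c \<in> best_ctx K Cs \<theta> x a'. rew \<theta> x a' c - rew \<theta> x b' c \<ge> \<Delta>)"
    and ctx: "\<forall>\<tau>\<ge>1. C \<tau> \<in> Cs"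
    and obs: "\<forall>\<tau>\<ge>1. y \<tau> = rew \<theta> x (A \<tau>) (C \<tau>) + \<eta> \<tau>"
    and alg: "\<forall>\<tau>\<ge>1. A \<tau> \<in> arms K \<and>
               (\<forall>a' \<in> arms K.
                  rhat x l A C y \<tau> a' + alpha CARD('d) l s \<tau> * sighat x l A C \<tau> a'
                  \<le> rhat x l A C y \<tau> (A \<tau>) + alpha CARD('d) l s \<tau> * sighat x l A C \<tau> (A \<tau>))"
    and Phi_cols: "\<forall>b' \<in> arms K. \<forall>j. column j (\<Phi> b') \<in> feat_set K Cs \<theta> x b'"
    and Phi_rank: "\<forall>b' \<in> arms K. lambda_min (transpose (\<Phi> b') ** \<Phi> b') > 0"
    and ab: "a \<in> arms K" "b \<in> arms K" "b \<noteq> a"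
    and t: "t \<ge> 1"
  shows "real (Nbar K \<theta> x l s A C y t a (group_ctx K Cs \<theta> x (\<Phi> b) b i))
         \<le> 8 * (alpha CARD('d) l s t)^2 / \<Delta>^2 * real CARD('d)
             * ln ((real CARD('d) + real t) / real CARD('d))"
proof -
  let ?d = "CARD('d)"
  define T where "T = {\<tau>. 1 \<le> \<tau> \<and> \<tau> < t \<and> A \<tau> = a \<and> C \<tau> \<in> group_ctx K Cs \<theta> x (\<Phi> b) b i \<and>
                      \<tau> \<notin> bad_set K \<theta> x l s A C y t}"
  define \<alpha> where "\<alpha> = alpha ?d l s t"
  define L where "L = ln ((real ?d + real t) / real ?d)"
  have N: "Nbar K \<theta> x l s A C y t a (group_ctx K Cs \<theta> x (\<Phi> b) b i) = card T"
    by (simp add: Nbar_def T_def)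
  have TP: "T \<subseteq> pulls A t a" by (auto simp: T_def pulls_def)
  have L0: "0 \<le> L" unfolding L_def by simp
  have RHS0: "0 \<le> 8 * \<alpha>^2 / \<Delta>^2 * real ?d * L"
    using L0 by simp
  show ?thesis
  proof (cases "T = {}")
    case True
    then show ?thesis using RHS0 N by (simp add: \<alpha>_def L_def)
  next
    case False
    then obtain \<tau>0 where t0: "\<tau>0 \<in> T" by blast
    define c0 where "c0 = C \<tau>0"
    have c0b: "c0 \<in> best_ctx K Cs \<theta> x b" using t0 by (simp add: T_def group_ctx_def c0_def)
    then have c0C: "c0 \<in> Cs" and c0gt: "rew \<theta> x b c0 > rew \<theta> x a c0"
      using ab by (auto simp: best_ctx_def)
    have xa0: "norm (x a c0) \<le> l" "norm (x b c0) \<le> l" using A1_x ab c0C by auto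
    have th0: "norm (\<theta> a) \<le> s" "norm (\<theta> b) \<le> s" using A1_theta ab by auto
    have l0: "0 \<le> l" using xa0 norm_ge_zero order_trans by blast
    have s0: "0 \<le> s" using th0 norm_ge_zero order_trans by blast
    have lpos: "0 < l"
    proof (rule ccontr)
      assume "\<not> 0 < l"
      then have "l = 0" using l0 by simp
      then have "x a c0 = 0" "x b c0 = 0" using xa0 by auto
      then show False using c0gt by (simp add: rew_def)
    qed
    have rb: "\<bar>rew \<theta> x b c0\<bar> \<le> s * l" "\<bar>rew \<theta> x a c0\<bar> \<le> s * l"
      unfolding rew_def using Cauchy_Schwarz_ineq2 th0 xa0 l0 s0
      by (meson mult_mono norm_ge_zero order_trans)+
    have Dle: "\<Delta> \<le> rew \<theta> x b c0 - rew \<theta> x a c0"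
      using A2 ab c0b by auto
    have alpha_ge: "l * s \<le> \<alpha>"
    proof -
      have "1 \<le> fexp t" by (simp add: fexp_def)
      then have "0 \<le> (2 + real ?d) * ln (fexp t)" by simp
      then show ?thesis by (simp add: \<alpha>_def alpha_def)
    qed
    have sig_nn: "0 \<le> sighat x l A C \<tau> a" for \<tau>
      unfolding sighat_def by (rule real_sqrt_ge_zero, rule q_nonneg[OF Vmat_inv[OF lpos]])
    have D2: "\<Delta> \<le> 2 * \<alpha>" using rb Dle alpha_ge by (simp add: abs_le_iff mult.commute)
    have good: "\<Delta> \<le> 2 * \<alpha> * sighat x l A C \<tau> a" if tT: "\<tau> \<in> T" for \<tau>
    proof -
      have t1: "1 \<le> \<tau>" "\<tau> < t" "A \<tau> = a" and cg: "C \<tau> \<in> group_ctx K Cs \<theta> x (\<Phi> b) b i"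
        and nb: "\<tau> \<notin> bad_set K \<theta> x l s A C y t" using tT by (auto simp: T_def)
      have cb: "C \<tau> \<in> best_ctx K Cs \<theta> x b" using cg by (simp add: group_ctx_def)
      have notbad: "\<not> bad_time K \<theta> x l s A C y \<tau>" using nb t1 by (simp add: bad_set_def)
      define aT where "aT = alpha ?d l s \<tau>"
      have ea: "\<bar>rhat x l A C y \<tau> a - rew \<theta> x a (C \<tau>)\<bar> \<le> aT * sighat x l A C \<tau> a"
        using notbad ab by (auto simp: bad_time_def aT_def not_less)
      have eb: "\<bar>rhat x l A C y \<tau> b - rew \<theta> x b (C \<tau>)\<bar> \<le> aT * sighat x l A C \<tau> b"
        using notbad ab by (auto simp: bad_time_def aT_def not_less)
      have ucb: "rhat x l A C y \<tau> b + aT * sighat x l A C \<tau> b \<le> rhat x l A C y \<tau> a + aT * sighat x l A C \<tau> a"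
        using alg t1 ab unfolding aT_def by metis
      have gap: "\<Delta> \<le> rew \<theta> x b (C \<tau>) - rew \<theta> x a (C \<tau>)" using A2 ab cb by auto
      have "\<Delta> \<le> 2 * aT * sighat x l A C \<tau> a"
        using ea eb ucb gap by (simp add: abs_le_iff)
      moreover have "aT \<le> \<alpha>" unfolding aT_def \<alpha>_def by (rule alpha_mono) (use t1 in auto)
      moreover have "0 \<le> sighat x l A C \<tau> a" by (rule sig_nn)
      ultimately show ?thesis by (meson mult_right_mono order_trans mult_left_mono zero_le_numeral)
    qed
    have sig0: "0 \<le> sighat x l A C \<tau>0 a" by (rule sig_nn)
    have apos: "0 < \<alpha>"
    proof (rule ccontr)
      assume "\<not> 0 < \<alpha>"
      then have "2 * \<alpha> * sighat x l A C \<tau>0 a \<le> 0" using sig0 by (simp add: mult_nonpos_nonneg)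
      then show False using good[OF t0] A2_pos by linarith
    qed
    define \<epsilon> where "\<epsilon> = \<Delta>^2 / (4 * \<alpha>^2)"
    have epos: "0 < \<epsilon>" using A2_pos apos by (simp add: \<epsilon>_def)
    have ele1: "\<epsilon> \<le> 1"
    proof -
      have "\<Delta>^2 \<le> (2 * \<alpha>)^2" using D2 A2_pos by (intro power_mono) auto
      then show ?thesis using apos by (simp add: \<epsilon>_def power_mult_distrib)
    qed
    have qT: "\<forall>\<tau>\<in>T. \<epsilon> \<le> x a (C \<tau>) \<bullet> (matrix_inv (Vmat x l A C \<tau> a) *v x a (C \<tau>))"
    proof
      fix \<tau> assume tT: "\<tau> \<in> T"
      define q where "q = x a (C \<tau>) \<bullet> (matrix_inv (Vmat x l A C \<tau> a) *v x a (C \<tau>))"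
      have q0: "0 \<le> q" unfolding q_def by (rule q_nonneg[OF Vmat_inv[OF lpos]])
      have sq: "sighat x l A C \<tau> a = sqrt q" by (simp add: sighat_def q_def)
      have "\<Delta> \<le> 2 * \<alpha> * sqrt q" using good[OF tT] sq by simp
      then have "\<Delta>^2 \<le> (2 * \<alpha> * sqrt q)^2" using A2_pos by (intro power_mono) auto
      also have "\<dots> = 4 * \<alpha>^2 * q" using q0 by (simp add: power_mult_distrib)
      finally have "\<Delta>^2 \<le> 4 * \<alpha>^2 * q" .
      then show "\<epsilon> \<le> q" using apos by (simp add: \<epsilon>_def field_simps)
    qed
    have nb: "\<forall>\<tau>\<in>pulls A t a. norm (x a (C \<tau>)) \<le> l"
      using A1_x ctx ab by (auto simp: pulls_def)
    have cb: "(1 + \<epsilon>)^card T \<le> ((real ?d + real (card (pulls A t a))) / real ?d)^?d"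
      by (rule count_bound[OF lpos nb TP epos qT])
    also have "\<dots> \<le> ((real ?d + real t) / real ?d)^?d"
      using card_pulls[of A t a] by (intro power_mono divide_right_mono) auto
    finally have pw: "(1 + \<epsilon>)^card T \<le> ((real ?d + real t) / real ?d)^?d" .
    have "ln ((1 + \<epsilon>)^card T) \<le> ln (((real ?d + real t) / real ?d)^?d)"
      using pw epos by (intro ln_mono) auto
    then have lnb: "real (card T) * ln (1 + \<epsilon>) \<le> real ?d * L"
      by (simp add: ln_realpow L_def)
    have "ln (inverse (1 + \<epsilon>)) \<le> inverse (1 + \<epsilon>) - 1"
      using epos by (intro ln_le_minus_one) simp
    then have h: "- ln (1 + \<epsilon>) \<le> inverse (1 + \<epsilon>) - 1" unfolding ln_inverse .
    have "inverse (1 + \<epsilon>) - 1 = - (\<epsilon> / (1 + \<epsilon>))" using epos by (simp add: field_simps)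
    then have "\<epsilon> / (1 + \<epsilon>) \<le> ln (1 + \<epsilon>)" using h by linarith
    moreover have "\<epsilon> / 2 \<le> \<epsilon> / (1 + \<epsilon>)"
      using epos ele1 by (intro divide_left_mono) auto
    ultimately have lnlow: "\<epsilon> / 2 \<le> ln (1 + \<epsilon>)" by linarith
    have "real (card T) * (\<epsilon> / 2) \<le> real ?d * L"
      using lnb lnlow by (meson mult_left_mono of_nat_0_le_iff order_trans)
    then have "real (card T) \<le> 2 / \<epsilon> * (real ?d * L)"
      using epos by (simp add: field_simps)
    also have "2 / \<epsilon> = 8 * \<alpha>^2 / \<Delta>^2"
      using apos A2_pos by (simp add: \<epsilon>_def field_simps)
    finally show ?thesis using N by (simp add: \<alpha>_def L_def mult.assoc)
  qed
qed

end
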